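(* Let $d\ge 1$ and let $\mathbf{X}$ and $\mathbf{Y}$ be $d$-dimensional random vectors. If $\mathbb{E}\, u(\mathbf{X}) > \mathbb{E}\, u(\mathbf{Y})$ for every $u \in \mathcal{U}$, then $\mathbf{X} \succ_{d} \mathbf{Y}$.
   Context: For $\mathbf{x},\mathbf{y}\in\mathbb{R}^d$ write $\mathbf{y}\preceq_p \mathbf{x}$ if $y_i\le x_i$ for all $i$, and say $\mathbf{x}$ Pareto dominates $\mathbf{y}$, written $\mathbf{x}\succ_p\mathbf{y}$, if $x_i\ge y_i$ for all $i$ and $x_i>y_i$ for some $i$. $\mathcal{U}$ denotes the class of strictly monotonically increasing functions $u:\mathbb{R}^d\to\mathbb{R}$, i.e. $\mathbf{x}\succ_p\mathbf{y}\implies u(\mathbf{x})>u(\mathbf{y})$. The CDF of a random vector $\mathbf{X}$ is $F_{\mathbf{X}}(\mathbf{x})=P(\mathbf{X}\preceq_p\mathbf{x})$. First-order stochastic dominance: $\mathbf{X}\succeq_{\mathrm{FSD}}\mathbf{Y}$ iff $F_{\mathbf{X}}(\mathbf{v})\le F_{\mathbf{Y}}(\mathbf{v})$ for all $\mathbf{v}\in\mathbb{R}^d$; strict first-order stochastic dominance $\mathbf{X}\succ_{\mathrm{FSD}}\mathbf{Y}$ means $\mathbf{X}\succeq_{\mathrm{FSD}}\mathbf{Y}$ and $F_{\mathbf{X}}(\mathbf{v})< F_{\mathbf{Y}}(\mathbf{v})$ for some $\mathbf{v}$ (the same definitions apply to real random variables, $d=1$). Distributional dominance: $\mathbf{X}\succ_{d}\mathbf{Y}$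 iff $\mathbf{X}\succeq_{\mathrm{FSD}}\mathbf{Y}$ and there is $i\in\{1,\dots,d\}$ such that the marginal $X_i$ strictly first-order stochastically dominates the marginal $Y_i$, $X_i\succ_{\mathrm{FSD}}Y_i$. All expectations appearing are assumed to exist. *)

theory Defs
  imports "HOL-Probability.Probability"
begin

definition pareto_le :: "real^'d \<Rightarrow> real^'d \<Rightarrow> bool" where
  "pareto_le y x \<longleftrightarrow> (\<forall>i. y $ i \<le> x $ i)"

definition pareto_dom :: "real^'d \<Rightarrow> real^'d \<Rightarrow> bool" where
  "pareto_dom x y \<longleftrightarrow> (\<forall>i. x $ i \<ge> y $ i) \<and> (\<exists>i. x $ i > y $ i)"

text \<open>The class U of strictly monotonically increasing functions.\<close>
definition strictly_incr :: "(real^'d \<Rightarrow> real) \<Rightarrow> bool" where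
  "strictly_incr u \<longleftrightarrow> (\<forall>x y. pareto_dom x y \<longrightarrow> u x > u y)"

definition vcdf :: "'a measure \<Rightarrow> ('a \<Rightarrow> real^'d) \<Rightarrow> real^'d \<Rightarrow> real" where
  "vcdf M X v = measure M {\<omega> \<in> space M. pareto_le (X \<omega>) v}"

definition rcdf :: "'a measure \<Rightarrow> ('a \<Rightarrow> real) \<Rightarrow> real \<Rightarrow> real" where
  "rcdf M Z t = measure M {\<omega> \<in> space M. Z \<omega> \<le> t}"

definition fsd_vec :: "'a measure \<Rightarrow> ('a \<Rightarrow> real^'d) \<Rightarrow> 'b measure \<Rightarrow> ('b \<Rightarrow> real^'d) \<Rightarrow> bool" where
  "fsd_vec M X N Y \<longleftrightarrow> (\<forall>v. vcdf M X v \<le> vcdf N Y v)"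

definition strict_fsd_real :: "'a measure \<Rightarrow> ('a \<Rightarrow> real) \<Rightarrow> 'b measure \<Rightarrow> ('b \<Rightarrow> real) \<Rightarrow> bool" where
  "strict_fsd_real M X N Y \<longleftrightarrow> (\<forall>t. rcdf M X t \<le> rcdf N Y t) \<and> (\<exists>t. rcdf M X t < rcdf N Y t)"

text \<open>Distributional dominance X \<succ>_d Y.\<close>
definition dist_dom :: "'a measure \<Rightarrow> ('a \<Rightarrow> real^'d) \<Rightarrow> 'b measure \<Rightarrow> ('b \<Rightarrow> real^'d) \<Rightarrow> bool" where
  "dist_dom M X N Y \<longleftrightarrow> fsd_vec M X N Y \<and>
     (\<exists>i. strict_fsd_real M (\<lambda>\<omega>. X \<omega> $ i) N (\<lambda>\<omega>. Y \<omega> $ i))"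

end

theory Submission
  imports Defs
begin

definition gsum :: "real^'d \<Rightarrow> real" where
  "gsum x = (\<Sum>i\<in>UNIV. arctan (x $ i))"

lemma gsum_strict: "pareto_dom x y \<Longrightarrow> gsum x > gsum y"
proof -
  assume "pareto_dom x y"
  then obtain j where le: "\<And>i. y $ i \<le> x $ i" and j: "y $ j < x $ j"
    unfolding pareto_dom_def by auto
  show ?thesis unfolding gsum_def
    by (rule sum_strict_mono_ex1) (auto simp: le j arctan_monotone' arctan_less_iff intro!: exI[of _ j])
qed

lemma gsum_meas [measurable]:
  "gsum \<in> borel_measurable borel"
  unfolding gsum_def by measurable

lemma gsum_bound: "norm (gsum x) \<le> real CARD('d) * pi" for x :: "real^'d"
proof -
  have "norm (gsum x) \<le> (\<Sum>i\<in>(UNIV::'d set). norm (arctan (x $ i)))"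
    unfolding gsum_def by (rule norm_sum)
  also have "\<dots> \<le> (\<Sum>i\<in>(UNIV::'d set). pi)"
  proof (rule sum_mono)
    fix i
    have "- (pi / 2) < arctan (x $ i) \<and> arctan (x $ i) < pi / 2" by (rule arctan_bounded)
    then show "norm (arctan (x $ i)) \<le> pi" using pi_gt_zero by (simp add: abs_le_iff)
  qed
  finally show ?thesis by simp
qed

lemma gsum_int:
  assumes "prob_space M" "X \<in> borel_measurable M"
  shows "integrable M (\<lambda>\<omega>. gsum (X \<omega> :: real^'d))"
proof -
  interpret prob_space M by fact
  show ?thesis
    by (rule integrable_const_bound[where B="real CARD('d) * pi"])
       (use assms(2) gsum_bound in auto)
qed

lemma arctan_norm_le: "norm (arctan y) \<le> pi"
proof -
  have "- (pi / 2) < arctan y \<and> arctan y < pi / 2" by (rule arctan_bounded)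
  then show ?thesis using pi_gt_zero by (simp add: abs_le_iff)
qed

lemma keyA:
  fixes M :: "'a measure" and N :: "'b measure"
    and X :: "'a \<Rightarrow> real^'d" and Y :: "'b \<Rightarrow> real^'d" and h :: "real^'d \<Rightarrow> real"
  assumes "prob_space M" and "prob_space N"
    and "X \<in> borel_measurable M" and "Y \<in> borel_measurable N"
    and H: "\<And>u. strictly_incr u \<Longrightarrow> integrable M (\<lambda>\<omega>. u (X \<omega>)) \<Longrightarrow>
               integrable N (\<lambda>\<omega>. u (Y \<omega>)) \<Longrightarrow>
               (\<integral>\<omega>. u (X \<omega>) \<partial>M) > (\<integral>\<omega>. u (Y \<omega>) \<partial>N)"
    and hX: "integrable M (\<lambda>\<omega>. h (X \<omega>))" and hY: "integrable N (\<lambda>\<omega>. h (Y \<omega>))"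
    and mono: "\<And>x y. pareto_dom x y \<Longrightarrow> h x \<ge> h y"
  shows "(\<integral>\<omega>. h (X \<omega>) \<partial>M) \<ge> (\<integral>\<omega>. h (Y \<omega>) \<partial>N)"
proof (rule ccontr)
  assume nt: "\<not> ?thesis"
  define \<delta> where "\<delta> = (\<integral>\<omega>. h (Y \<omega>) \<partial>N) - (\<integral>\<omega>. h (X \<omega>) \<partial>M)"
  have dpos: "\<delta> > 0" using nt unfolding \<delta>_def by linarith
  define D where "D = (\<integral>\<omega>. gsum (Y \<omega>) \<partial>N) - (\<integral>\<omega>. gsum (X \<omega>) \<partial>M)"
  define e where "e = \<delta> / (\<bar>D\<bar> + 1)"
  have epos: "e > 0" using dpos unfolding e_def by simp
  have eD: "e * \<bar>D\<bar> < \<delta>"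
  proof -
    have "e * \<bar>D\<bar> = \<delta> * (\<bar>D\<bar> / (\<bar>D\<bar> + 1))" unfolding e_def by simp
    also have "\<dots> < \<delta> * 1" using dpos by (intro mult_strict_left_mono) auto
    finally show ?thesis by simp
  qed
  define u where "u = (\<lambda>x. h x + e * gsum x)"
  have si: "strictly_incr u"
    unfolding strictly_incr_def u_def
    using mono gsum_strict epos by (smt (verit, best) mult_strict_left_mono)
  have gX: "integrable M (\<lambda>\<omega>. gsum (X \<omega>))" using gsum_int assms by blast
  have gY: "integrable N (\<lambda>\<omega>. gsum (Y \<omega>))" using gsum_int assms by blast
  have iX: "integrable M (\<lambda>\<omega>. u (X \<omega>))" unfolding u_def using hX gX by auto
  have iY: "integrable N (\<lambda>\<omega>. u (Y \<omega>))" unfolding u_def using hY gY by auto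
  have "(\<integral>\<omega>. u (X \<omega>) \<partial>M) > (\<integral>\<omega>. u (Y \<omega>) \<partial>N)" using H si iX iY by blast
  moreover have "(\<integral>\<omega>. u (X \<omega>) \<partial>M) = (\<integral>\<omega>. h (X \<omega>) \<partial>M) + e * (\<integral>\<omega>. gsum (X \<omega>) \<partial>M)"
    unfolding u_def using hX gX by simp
  moreover have "(\<integral>\<omega>. u (Y \<omega>) \<partial>N) = (\<integral>\<omega>. h (Y \<omega>) \<partial>N) + e * (\<integral>\<omega>. gsum (Y \<omega>) \<partial>N)"
    unfolding u_def using hY gY by simp
  ultimately have "\<delta> < - (e * D)" unfolding \<delta>_def D_def by (simp add: algebra_simps)
  moreover have "- (e * D) \<le> e * \<bar>D\<bar>" using epos mult_left_mono[of "- D" "\<bar>D\<bar>" e] by simp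
  ultimately show False using eD by simp
qed

lemma int_ind:
  assumes "prob_space M" "X \<in> borel_measurable M" "A \<in> sets borel"
  shows "(LINT \<omega>|M. (indicator A (X \<omega>) :: real)) = measure M {\<omega>\<in>space M. X \<omega> \<in> A}"
    and "integrable M (\<lambda>\<omega>. indicator A (X \<omega>) :: real)"
proof -
  interpret prob_space M by fact
  have "(LINT \<omega>|M. (indicator A (X \<omega>) :: real)) = integral\<^sup>L (distr M borel X) (indicator A)"
    using assms by (subst integral_distr) auto
  also have "\<dots> = measure (distr M borel X) A"
    using assms by simp
  also have "\<dots> = measure M (X -` A \<inter> space M)"
    using assms by (simp add: measure_distr)
  also have "X -` A \<inter> space M = {\<omega>\<in>space M. X \<omega> \<in> A}" by auto
  finally show "(LINT \<omega>|M. (indicator A (X \<omega>) :: real)) = measure M {\<omega>\<in>space M. X \<omega> \<in> A}" .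
  show "integrable M (\<lambda>\<omega>. indicator A (X \<omega>) :: real)"
    by (rule integrable_const_bound[where B=1]) (use assms in auto)
qed

lemma test1: "{x::real^'d. pareto_le x v} \<in> sets borel"
  unfolding pareto_le_def by measurable

lemma test2: "{x::real^'d. x $ i \<le> t} \<in> sets borel"
  by measurable

lemma rv_nth: assumes "X \<in> borel_measurable M" shows "(\<lambda>\<omega>. (X \<omega> :: real^'d) $ i) \<in> borel_measurable M"
proof -
  have "(\<lambda>x::real^'d. x $ i) \<in> borel_measurable borel"
    by (intro borel_measurable_continuous_onI linear_continuous_on bounded_linear_vec_nth)
  from measurable_compose[OF assms this] show ?thesis by simp
qed

lemma cdf_distr_eq:
  assumes "prob_space M" "Z \<in> borel_measurable M"
  shows "cdf (distr M borel Z) t = rcdf M Z t"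
  using assms unfolding cdf_def rcdf_def
  by (simp add: measure_distr vimage_def Int_def conj_commute)

theorem theorem3p1:
  fixes M :: "'a measure" and N :: "'b measure"
    and X :: "'a \<Rightarrow> real^'d" and Y :: "'b \<Rightarrow> real^'d"
  assumes "prob_space M" and "prob_space N"
    and "X \<in> borel_measurable M" and "Y \<in> borel_measurable N"
    and "\<And>u. strictly_incr u \<Longrightarrow> integrable M (\<lambda>\<omega>. u (X \<omega>)) \<Longrightarrow>
               integrable N (\<lambda>\<omega>. u (Y \<omega>)) \<Longrightarrow>
               (\<integral>\<omega>. u (X \<omega>) \<partial>M) > (\<integral>\<omega>. u (Y \<omega>) \<partial>N)"
  shows "dist_dom M X N Y"
proof -
  note A = assms
  have gen: "measure M {\<omega>\<in>space M. X \<omega> \<in> S} \<le> measure N {\<omega>\<in>space N. Y \<omega> \<in> S}"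
    if S: "S \<in> sets borel" and dn: "\<And>x y. pareto_dom x y \<Longrightarrow> x \<in> S \<Longrightarrow> y \<in> S" for S
  proof -
    have "(\<integral>\<omega>. - (indicator S (X \<omega>) :: real) \<partial>M) \<ge> (\<integral>\<omega>. - (indicator S (Y \<omega>) :: real) \<partial>N)"
    proof (rule keyA[OF A])
      show "integrable M (\<lambda>\<omega>. - (indicator S (X \<omega>) :: real))"
        using int_ind(2)[OF A(1) A(3) S] by simp
      show "integrable N (\<lambda>\<omega>. - (indicator S (Y \<omega>) :: real))"
        using int_ind(2)[OF A(2) A(4) S] by simp
      fix x y :: "real^'d" assume "pareto_dom x y"
      then show "- (indicator S y :: real) \<le> - indicator S x"
        using dn[of x y] by (auto simp: indicator_def)
    qed
    then show ?thesis using int_ind(1)[OF A(1) A(3) S] int_ind(1)[OF A(2) A(4) S] by simp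
  qed
  have fsd: "fsd_vec M X N Y"
    unfolding fsd_vec_def vcdf_def
  proof
    fix v
    show "measure M {\<omega> \<in> space M. pareto_le (X \<omega>) v} \<le> measure N {\<omega> \<in> space N. pareto_le (Y \<omega>) v}"
    proof -
      have dn1: "y \<in> {x. pareto_le x v}" if "pareto_dom x y" "x \<in> {x. pareto_le x v}" for x y
      proof -
        from that have a: "\<forall>j. y $ j \<le> x $ j" "\<forall>j. x $ j \<le> v $ j"
          unfolding pareto_dom_def pareto_le_def by auto
        have "y $ j \<le> v $ j" for j using order_trans[OF spec[OF a(1), of j] spec[OF a(2), of j]] .
        then show ?thesis unfolding pareto_le_def by simp
      qed
      from gen[OF test1 dn1] show ?thesis by simp
    qed
  qed
  have marg: "rcdf M (\<lambda>\<omega>. X \<omega> $ i) t \<le> rcdf N (\<lambda>\<omega>. Y \<omega> $ i) t" for i t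
  proof -
    have dn1: "y \<in> {x. x $ i \<le> t}" if "pareto_dom x y" "x \<in> {x. x $ i \<le> t}" for x y
    proof -
      from that have a: "\<forall>j. y $ j \<le> x $ j" "x $ i \<le> t"
        unfolding pareto_dom_def by auto
      show ?thesis using order_trans[OF spec[OF a(1), of i] a(2)] by simp
    qed
    from gen[OF test2 dn1] show ?thesis unfolding rcdf_def by simp
  qed
  have gX: "integrable M (\<lambda>\<omega>. gsum (X \<omega>))" using gsum_int A by blast
  have gY: "integrable N (\<lambda>\<omega>. gsum (Y \<omega>))" using gsum_int A by blast
  have gl: "(\<integral>\<omega>. gsum (X \<omega>) \<partial>M) > (\<integral>\<omega>. gsum (Y \<omega>) \<partial>N)"
    using A(5)[OF _ gX gY] gsum_strict unfolding strictly_incr_def by blast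
  have aX: "integrable M (\<lambda>\<omega>. arctan (X \<omega> $ i))" for i
  proof (rule finite_measure.integrable_const_bound[where B="pi"])
    show "finite_measure M" using A(1) by (simp add: prob_space_def)
    show "AE x in M. norm (arctan (X x $ i)) \<le> pi" using arctan_norm_le by simp
    show "(\<lambda>\<omega>. arctan (X \<omega> $ i)) \<in> borel_measurable M"
      using measurable_compose[OF rv_nth[OF A(3)] borel_measurable_arctan] .
  qed
  have aY: "integrable N (\<lambda>\<omega>. arctan (Y \<omega> $ i))" for i
  proof (rule finite_measure.integrable_const_bound[where B="pi"])
    show "finite_measure N" using A(2) by (simp add: prob_space_def)
    show "AE x in N. norm (arctan (Y x $ i)) \<le> pi" using arctan_norm_le by simp
    show "(\<lambda>\<omega>. arctan (Y \<omega> $ i)) \<in> borel_measurable N"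
      using measurable_compose[OF rv_nth[OF A(4)] borel_measurable_arctan] .
  qed
  have sX: "(\<integral>\<omega>. gsum (X \<omega>) \<partial>M) = (\<Sum>i\<in>UNIV. (\<integral>\<omega>. arctan (X \<omega> $ i) \<partial>M))"
    unfolding gsum_def using Bochner_Integration.integral_sum[of UNIV M "\<lambda>i \<omega>. arctan (X \<omega> $ i)"] aX by simp
  have sY: "(\<integral>\<omega>. gsum (Y \<omega>) \<partial>N) = (\<Sum>i\<in>UNIV. (\<integral>\<omega>. arctan (Y \<omega> $ i) \<partial>N))"
    unfolding gsum_def using Bochner_Integration.integral_sum[of UNIV N "\<lambda>i \<omega>. arctan (Y \<omega> $ i)"] aY by simp
  obtain i where i: "(\<integral>\<omega>. arctan (X \<omega> $ i) \<partial>M) > (\<integral>\<omega>. arctan (Y \<omega> $ i) \<partial>N)"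
  proof (rule ccontr)
    assume "\<not> thesis"
    with that have "\<And>i. (\<integral>\<omega>. arctan (X \<omega> $ i) \<partial>M) \<le> (\<integral>\<omega>. arctan (Y \<omega> $ i) \<partial>N)"
      by (meson not_le)
    then have "(\<Sum>i\<in>UNIV. (\<integral>\<omega>. arctan (X \<omega> $ i) \<partial>M)) \<le> (\<Sum>i\<in>UNIV. (\<integral>\<omega>. arctan (Y \<omega> $ i) \<partial>N))"
      by (intro sum_mono)
    with gl sX sY show False by simp
  qed
  have ex: "\<exists>t. rcdf M (\<lambda>\<omega>. X \<omega> $ i) t < rcdf N (\<lambda>\<omega>. Y \<omega> $ i) t"
  proof (rule ccontr)
    assume "\<not> ?thesis"
    then have eq: "rcdf M (\<lambda>\<omega>. X \<omega> $ i) t = rcdf N (\<lambda>\<omega>. Y \<omega> $ i) t" for t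
      using marg[of i t] by (simp add: not_less) (meson order_antisym)
    have mX: "(\<lambda>\<omega>. X \<omega> $ i) \<in> borel_measurable M" using rv_nth[OF A(3)] .
    have mY: "(\<lambda>\<omega>. Y \<omega> $ i) \<in> borel_measurable N" using rv_nth[OF A(4)] .
    have "distr M borel (\<lambda>\<omega>. X \<omega> $ i) = distr N borel (\<lambda>\<omega>. Y \<omega> $ i)"
    proof (rule cdf_unique)
      show "real_distribution (distr M borel (\<lambda>\<omega>. X \<omega> $ i))"
        using prob_space.real_distribution_distr[OF A(1) mX] .
      show "real_distribution (distr N borel (\<lambda>\<omega>. Y \<omega> $ i))"
        using prob_space.real_distribution_distr[OF A(2) mY] .
      show "cdf (distr M borel (\<lambda>\<omega>. X \<omega> $ i)) = cdf (distr N borel (\<lambda>\<omega>. Y \<omega> $ i))"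
        using cdf_distr_eq[OF A(1) mX] cdf_distr_eq[OF A(2) mY] eq by auto
    qed
    then have "integral\<^sup>L (distr M borel (\<lambda>\<omega>. X \<omega> $ i)) arctan
             = integral\<^sup>L (distr N borel (\<lambda>\<omega>. Y \<omega> $ i)) arctan" by simp
    then have "(\<integral>\<omega>. arctan (X \<omega> $ i) \<partial>M) = (\<integral>\<omega>. arctan (Y \<omega> $ i) \<partial>N)"
      using mX mY by (simp add: integral_distr)
    with i show False by simp
  qed
  show ?thesis
    unfolding dist_dom_def strict_fsd_real_def using fsd marg ex by blast
qed

end
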